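(* Let $p$ be an odd prime and let $n=2^\nu p^r n'$, where $\nu>0$ and $r\geq0$ are integers and $n'$ is an odd positive integer with $p\nmid n'$. Let $l$ be a positive integer. Then there exists a Hermitian self-dual negacyclic code of length $n$ over $\mathbb{F}_{p^{2l}}$ if and only if $2^{\nu+1}\nmid(p^l+1)$.
   Context: A linear code of length $n$ over $\mathbb{F}_{p^{2l}}$ is a subspace of $\mathbb{F}_{p^{2l}}^n$; it is negacyclic if $(-c_{n-1},c_0,\dots,c_{n-2})\in C$ whenever $(c_0,\dots,c_{n-1})\in C$. The Hermitian dual is $C^{\perp_H}=\{v : \sum_i v_ic_i^{p^l}=0\ \forall c\in C\}$, and $C$ is Hermitian self-dual if $C=C^{\perp_H}$. *)

theory Defs
  imports "HOL-Computational_Algebra.Primes"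
begin

definition linear_code :: "nat \<Rightarrow> 'a::field list set \<Rightarrow> bool" where
  "linear_code n C \<longleftrightarrow>
     C \<subseteq> {v. length v = n} \<and>
     replicate n 0 \<in> C \<and>
     (\<forall>u\<in>C. \<forall>v\<in>C. map2 (+) u v \<in> C) \<and>
     (\<forall>a. \<forall>v\<in>C. map (\<lambda>x. a * x) v \<in> C)"

definition negashift :: "'a::ring_1 list \<Rightarrow> 'a list" where
  "negashift c = (if c = [] then [] else (- last c) # butlast c)"

definition negacyclic_code :: "nat \<Rightarrow> 'a::field list set \<Rightarrow> bool" where
  "negacyclic_code n C \<longleftrightarrow> linear_code n C \<and> (\<forall>c\<in>C. negashift c \<in> C)"

text \<open>Hermitian form with conjugation x \<mapsto> x^q, where q = p^l and the field has q^2 elements.\<close>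
definition herm_inner :: "nat \<Rightarrow> 'a::field list \<Rightarrow> 'a list \<Rightarrow> 'a" where
  "herm_inner q v c = sum_list (map2 (\<lambda>x y. x * y ^ q) v c)"

definition herm_dual :: "nat \<Rightarrow> nat \<Rightarrow> 'a::field list set \<Rightarrow> 'a list set" where
  "herm_dual q n C = {v. length v = n \<and> (\<forall>c\<in>C. herm_inner q v c = 0)}"

definition herm_self_dual :: "nat \<Rightarrow> nat \<Rightarrow> 'a::field list set \<Rightarrow> bool" where
  "herm_self_dual q n C \<longleftrightarrow> C = herm_dual q n C"

end

theory Submission
  imports Defs "HOL-Computational_Algebra.Polynomial"
begin


lemma card_times_zero:
  fixes x :: "'a::{finite,field}"
  shows "of_nat (card (UNIV::'a set)) * x = 0"
proof -
  have "(\<Sum>y\<in>UNIV. x + y) = (\<Sum>y\<in>(UNIV::'a set). y)"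
    by (rule sum.reindex_bij_witness[of _ "\<lambda>y. y - x" "\<lambda>y. x + y"]) auto
  then show ?thesis by (simp add: sum.distrib)
qed

lemma char_is_p:
  assumes "prime p" "card (UNIV :: 'a::{finite,field} set) = p ^ k" "k > 0"
  shows "CHAR('a) = p"
proof -
  have "of_nat (p^k) = (0::'a)" using card_times_zero[where x="1::'a"] assms by simp
  hence "CHAR('a) dvd p^k" using of_nat_eq_0_iff_char_dvd by blast
  moreover have "prime CHAR('a)"
    using prime_CHAR_semidom[where ?'a='a] finite_imp_CHAR_pos[where ?'a='a] by auto
  ultimately have "CHAR('a) dvd p" using prime_dvd_power by blast
  thus ?thesis using \<open>prime CHAR('a)\<close> assms(1) primes_dvd_imp_eq by blast
qed

lemma pow_card_same:
  fixes x :: "'a::{finite,field}"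
  shows "x ^ card (UNIV :: 'a set) = x"
proof (cases "x = 0")
  case False
  have "x * (\<Prod>y\<in>UNIV-{0}. x * y) = x * x ^ (card (UNIV :: 'a set) - 1) * \<Prod>(UNIV-{0})"
    by (simp add: prod.distrib mult_ac)
  also have "x * x ^ (card (UNIV :: 'a set) - 1) = x ^ Suc (card (UNIV :: 'a set) - 1)"
    by (subst power_Suc) auto
  also have "Suc (card (UNIV :: 'a set) - 1) = card (UNIV :: 'a set)"
    using finite_UNIV_card_ge_0[where ?'a = 'a] by simp
  also have "(\<Prod>y\<in>UNIV-{0}. x * y) = (\<Prod>y\<in>UNIV-{0}. y)"
    by (rule prod.reindex_bij_witness[of _ "\<lambda>y. y / x" "\<lambda>y. x * y"]) (use False in auto)
  finally show ?thesis
    by simp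
qed (use finite_UNIV_card_ge_0[where ?'a = 'a] in auto)

lemma exists_nonres:
  assumes "card (UNIV :: 'a::{finite,field} set) \<ge> 3"
  shows "\<exists>x::'a. x \<noteq> 0 \<and> x ^ ((card (UNIV::'a set) - 1) div 2) \<noteq> 1"
proof (rule ccontr)
  let ?Q = "card (UNIV::'a set)"
  let ?k = "(?Q - 1) div 2"
  assume "\<not> ?thesis"
  hence H: "\<And>x::'a. x \<noteq> 0 \<Longrightarrow> x ^ ?k = 1" by blast
  have k1: "?k \<ge> 1" using assms by auto
  define P :: "'a poly" where "P = monom 1 ?k + [:-1:]"
  have deg: "degree P = ?k" unfolding P_def using k1 by (subst degree_add_eq_left) (auto simp: degree_monom_eq)
  have "P \<noteq> 0" using deg k1 by auto
  hence "card {x. poly P x = 0} \<le> ?k" using card_poly_roots_bound deg by metis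
  moreover have "UNIV - {0} \<subseteq> {x. poly P x = 0}"
    using H by (auto simp: P_def poly_monom)
  hence "card (UNIV - {0::'a}) \<le> card {x. poly P x = 0}"
    by (intro card_mono) auto
  ultimately have "?Q - 1 \<le> ?k" by (simp add: card_Diff_singleton)
  thus False using assms by auto
qed


definition vadd :: "'a::field list \<Rightarrow> 'a list \<Rightarrow> 'a list" where "vadd x y = map2 (+) x y"
definition vsc :: "'a::field \<Rightarrow> 'a list \<Rightarrow> 'a list" where "vsc a x = map ((*) a) x"

lemma length_vadd[simp]: "length (vadd x y) = min (length x) (length y)" by (simp add: vadd_def)
lemma length_vsc[simp]: "length (vsc a x) = length x" by (simp add: vsc_def)
lemma nth_vadd[simp]: "i < length x \<Longrightarrow> i < length y \<Longrightarrow> vadd x y ! i = x!i + y!i"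
  by (simp add: vadd_def)
lemma nth_vsc[simp]: "i < length x \<Longrightarrow> vsc a x ! i = a * x!i" by (simp add: vsc_def)
lemma vadd_append: "length x = length z \<Longrightarrow> vadd (x@y) (z@w) = vadd x z @ vadd y w"
  by (simp add: vadd_def)
lemma vsc_append: "vsc a (x@y) = vsc a x @ vsc a y" by (simp add: vsc_def)

locale hq =
  fixes q :: nat and ty :: "'a::field itself"
  assumes q_odd: "odd q"
    and conj_add: "\<And>a b::'a. (a+b)^q = a^q + b^q"
    and conj_invol: "\<And>a::'a. (a^q)^q = a"
    and two_nz: "(2::'a) \<noteq> 0"
begin

lemma q_pos: "q > 0" using q_odd by (cases q) auto

lemma conj_0[simp]: "(0::'a)^q = 0" using q_pos by simp
lemma conj_sum: "(\<Sum>i\<in>A. f i :: 'a)^q = (\<Sum>i\<in>A. f i ^ q)"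
  by (induction A rule: infinite_finite_induct) (auto simp: conj_add)
lemma conj_minus: "(- a :: 'a)^q = - (a^q)" using q_odd by simp
lemma conj_2: "(2::'a)^q = 2"
proof -
  have "(1+1::'a)^q = 1 + 1" by (simp only: conj_add power_one)
  thus ?thesis by (simp add: one_add_one)
qed
lemma conj_half: "(inverse 2::'a)^q = inverse 2"
  by (simp only: power_inverse conj_2)
lemma conj_eq0: "((a::'a)^q = 0) = (a = 0)" using q_pos by simp

abbreviation hi :: "'a list \<Rightarrow> 'a list \<Rightarrow> 'a" where "hi \<equiv> herm_inner q"

lemma hi_nth: "length x = length y \<Longrightarrow> hi x y = (\<Sum>i<length x. x!i * (y!i)^q)"
  unfolding herm_inner_def
  by (simp add: sum_list_sum_nth atLeast0LessThan)

lemma hi_append: "length a = length c \<Longrightarrow> hi (a@b) (c@d) = hi a c + hi b d"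
  unfolding herm_inner_def by simp

lemma hi_add_left: "length x = length z \<Longrightarrow> length y = length z \<Longrightarrow>
   hi (vadd x y) z = hi x z + hi y z"
  by (simp add: hi_nth sum.distrib distrib_right)

lemma hi_add_right: "length x = length y \<Longrightarrow> length x = length z \<Longrightarrow>
   hi x (vadd y z) = hi x y + hi x z"
  by (simp add: hi_nth sum.distrib distrib_left conj_add)

lemma hi_sc_left: "length x = length z \<Longrightarrow> hi (vsc a x) z = a * hi x z"
  by (simp add: hi_nth sum_distrib_left mult.assoc)

lemma hi_sc_right: "length x = length z \<Longrightarrow> hi x (vsc a z) = a^q * hi x z"
  by (simp add: hi_nth sum_distrib_left power_mult_distrib mult_ac)

lemma hi_sym: "length x = length y \<Longrightarrow> hi y x = (hi x y)^q"
  by (simp add: hi_nth conj_sum power_mult_distrib conj_invol mult.commute)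

definition unitv :: "nat \<Rightarrow> nat \<Rightarrow> 'a list" where
  "unitv N j = map (\<lambda>i. if i = j then 1 else 0) [0..<N]"

lemma hi_unitv: "length x = N \<Longrightarrow> j < N \<Longrightarrow> hi x (unitv N j) = x!j"
proof -
  assume a: "length x = N" "j < N"
  have "hi x (unitv N j) = (\<Sum>i<N. x!i * (if i = j then 1 else 0))"
    using a by (simp add: hi_nth unitv_def cong: if_cong) (intro sum.cong; simp add: q_pos)
  also have "\<dots> = x!j" using a by (simp add: if_distrib cong: if_cong)
  finally show ?thesis .
qed

lemma nondeg: "length x = N \<Longrightarrow> (\<And>b. length b = N \<Longrightarrow> hi x b = 0) \<Longrightarrow> x = replicate N 0"
proof (rule nth_equalityI)
  fix i assume "length x = N" "\<And>b. length b = N \<Longrightarrow> hi x b = 0" "i < length x"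
  thus "x ! i = replicate N 0 ! i" using hi_unitv[of x N i] by (simp add: unitv_def)
qed simp

end


context hq begin

definition subsp :: "nat \<Rightarrow> 'a list set \<Rightarrow> bool" where
  "subsp N S \<longleftrightarrow> S \<subseteq> {x. length x = N} \<and> replicate N 0 \<in> S \<and>
     (\<forall>x\<in>S. \<forall>y\<in>S. vadd x y \<in> S) \<and> (\<forall>a. \<forall>x\<in>S. vsc a x \<in> S)"

lemma linear_code_subsp: "linear_code N C = subsp N C"
  by (simp add: linear_code_def subsp_def vadd_def vsc_def)

lemma hi_zero_left[simp]: "length y = N \<Longrightarrow> hi (replicate N 0) y = 0"
  by (simp add: hi_nth)
lemma hi_zero_right[simp]: "length x = N \<Longrightarrow> hi x (replicate N 0) = 0"
  by (simp add: hi_nth)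

lemma hi_comb_left: "length x = length w \<Longrightarrow> length u = length w \<Longrightarrow> length v = length w \<Longrightarrow>
  hi (vadd (vadd x (vsc a u)) (vsc b v)) w = hi x w + a * hi u w + b * hi v w"
  by (simp add: hi_add_left hi_sc_left)

lemma hi_comb_right: "length x = length w \<Longrightarrow> length u = length w \<Longrightarrow> length v = length w \<Longrightarrow>
  hi w (vadd (vadd x (vsc a u)) (vsc b v)) = hi w x + a^q * hi w u + b^q * hi w v"
  by (simp add: hi_add_right hi_sc_right)

lemma vid1: "length z = length u \<Longrightarrow> length v = length u \<Longrightarrow>
  vadd (vadd (vadd (vadd z (vsc (-a) u)) (vsc (-b) v)) (vsc a u)) (vsc b v) = z"
  by (rule nth_equalityI) (auto simp: algebra_simps)

lemma vid2: "length z = length u \<Longrightarrow>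
  vadd (vadd z (vsc (-a) u)) (vsc a u) = z"
  by (rule nth_equalityI) (auto simp: algebra_simps)

lemma subsp_comb: "subsp N S \<Longrightarrow> x \<in> S \<Longrightarrow> u \<in> S \<Longrightarrow> v \<in> S \<Longrightarrow>
   vadd (vadd x (vsc a u)) (vsc b v) \<in> S"
  unfolding subsp_def by blast

lemma odd_aux:
  assumes fin: "finite (UNIV::'a set)"
  shows "subsp N V \<Longrightarrow> (\<forall>x\<in>V. (\<forall>y\<in>V. hi x y = 0) \<longrightarrow> x = replicate N 0) \<Longrightarrow>
     subsp N U \<Longrightarrow> U \<subseteq> V \<Longrightarrow> (\<forall>x\<in>V. (\<forall>y\<in>U. hi x y = 0) \<longleftrightarrow> x \<in> U) \<Longrightarrow>
     \<exists>t. card V = card (UNIV::'a set)^(2*t)"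
proof (induction "card V" arbitrary: V U rule: less_induct)
  case (less V U)
  let ?z = "replicate N 0 :: 'a list"
  let ?Q = "card (UNIV::'a set)"
  have lenV: "\<And>x. x \<in> V \<Longrightarrow> length x = N" using less.prems(1) unfolding subsp_def by auto
  have finV: "finite V"
  proof -
    have "V \<subseteq> {xs. set xs \<subseteq> UNIV \<and> length xs = N}" using lenV by auto
    thus ?thesis using finite_lists_length_eq[OF fin, of N] finite_subset by blast
  qed
  have zV: "?z \<in> V" using less.prems(1) unfolding subsp_def by auto
  have zU: "?z \<in> U" using less.prems(3) unfolding subsp_def by auto
  show ?case
  proof (cases "U \<subseteq> {?z}")
    case True
    have "V = {?z}"
    proof
      show "V \<subseteq> {?z}"
      proof
        fix x assume "x \<in> V"
        have "\<forall>y\<in>U. hi x y = 0"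
        proof
          fix y assume "y \<in> U" hence "y = ?z" using True by auto
          thus "hi x y = 0" using lenV[OF \<open>x \<in> V\<close>] by simp
        qed
        hence "x \<in> U" using less.prems(5) \<open>x \<in> V\<close> by blast
        thus "x \<in> {?z}" using True by auto
      qed
    qed (use zV in auto)
    thus ?thesis by (intro exI[of _ 0]) simp
  next
    case False
    then obtain u where uU: "u \<in> U" and unz: "u \<noteq> ?z" by auto
    have uV: "u \<in> V" using uU less.prems(4) by auto
    have lu: "length u = N" using uV lenV by auto
    have Uperp: "\<And>x y. x \<in> U \<Longrightarrow> y \<in> U \<Longrightarrow> hi x y = 0"
      using less.prems(4,5) by blast
    obtain w where wV: "w \<in> V" and huw: "hi u w \<noteq> 0" using less.prems(2) uV unz by blast
    have lw: "length w = N" using wV lenV by auto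
    define \<gamma> where "\<gamma> = hi w u"
    have g: "\<gamma> \<noteq> 0" unfolding \<gamma>_def using huw hi_sym[of u w] lu lw conj_eq0 by simp
    define v where "v = vsc (inverse \<gamma>) w"
    have vV: "v \<in> V" using less.prems(1) wV unfolding v_def subsp_def by auto
    have lv: "length v = N" using vV lenV by auto
    have hvu: "hi v u = 1" unfolding v_def using hi_sc_left[of w u] lu lw g by (simp add: \<gamma>_def)
    have huv: "hi u v = 1" using hi_sym[of v u] lu lv hvu by simp
    have huu: "hi u u = 0" using Uperp uU by blast
    define V' where "V' = {x\<in>V. hi x u = 0 \<and> hi x v = 0}"
    define U' where "U' = {x\<in>U. hi x v = 0}"
    have U'V': "U' \<subseteq> V'" unfolding U'_def V'_def using less.prems(4) Uperp uU by auto
    have sV': "subsp N V'"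
      using less.prems(1) lu lv unfolding subsp_def V'_def
      by (auto simp: hi_add_left hi_sc_left subset_iff)
    have sU': "subsp N U'"
      using less.prems(3) lv unfolding subsp_def U'_def
      by (auto simp: hi_add_left hi_sc_left subset_iff)
    define \<beta> where "\<beta> z = hi z u" for z
    define \<alpha> where "\<alpha> z = hi z v - \<beta> z * hi v v" for z
    define f where "f t = vadd (vadd (fst t) (vsc (fst (snd t)) u)) (vsc (snd (snd t)) v)" for t
    define g where "g z = (vadd (vadd z (vsc (-\<alpha> z) u)) (vsc (-\<beta> z) v), \<alpha> z, \<beta> z)" for z
    have gV': "fst (g z) \<in> V'" if "z \<in> V" for z
    proof -
      have lz: "length z = N" using that lenV by auto
      have "fst (g z) \<in> V" unfolding g_def using subsp_comb[OF less.prems(1) that uV vV] by simp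
      moreover have "hi (fst (g z)) u = 0" unfolding g_def using lz lu lv
        by (simp add: hi_comb_left huu hvu \<beta>_def)
      moreover have "hi (fst (g z)) v = 0" unfolding g_def using lz lu lv
        by (simp add: hi_comb_left huv \<alpha>_def \<beta>_def)
      ultimately show ?thesis unfolding V'_def by auto
    qed
    have bij: "bij_betw f (V' \<times> UNIV \<times> UNIV) V"
    proof (rule bij_betw_byWitness[where f' = g])
      show "\<forall>t\<in>V' \<times> UNIV \<times> UNIV. g (f t) = t"
      proof
        fix t assume "t \<in> V' \<times> (UNIV::'a set) \<times> (UNIV::'a set)"
        then obtain x a b where t: "t = (x,a,b)" and xV': "x \<in> V'" by auto
        have lx: "length x = N" using xV' lenV unfolding V'_def by auto
        have hxu: "hi x u = 0" and hxv: "hi x v = 0" using xV' unfolding V'_def by auto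
        have b: "\<beta> (f t) = b" unfolding \<beta>_def f_def t using lx lu lv
          by (simp add: hi_comb_left hxu huu hvu)
        have a: "\<alpha> (f t) = a" unfolding \<alpha>_def b unfolding f_def t using lx lu lv
          by (simp add: hi_comb_left hxv huv)
        have "fst (g (f t)) = x" unfolding g_def a b unfolding f_def t using lx lu lv
          by (rule_tac nth_equalityI) (auto simp: algebra_simps)
        thus "g (f t) = t" using a b by (simp add: g_def t)
      qed
      show "\<forall>z\<in>V. f (g z) = z"
        using lenV lu lv by (auto simp: f_def g_def vid1)
      show "f ` (V' \<times> UNIV \<times> UNIV) \<subseteq> V"
        using subsp_comb[OF less.prems(1) _ uV vV] unfolding f_def V'_def by auto
      show "g ` V \<subseteq> V' \<times> UNIV \<times> UNIV"
      proof
        fix t assume "t \<in> g ` V"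
        then obtain z where "z \<in> V" "t = g z" by auto
        thus "t \<in> V' \<times> UNIV \<times> UNIV" using gV' by (simp add: mem_Times_iff)
      qed
    qed
    have cardV: "card V = card V' * (?Q * ?Q)"
      using bij_betw_same_card[OF bij] card_cartesian_product[of "UNIV::'a set" "UNIV::'a set"]
      by (simp add: card_cartesian_product)
    have Q2: "?Q \<ge> 2"
    proof -
      have "{0::'a, 1} \<subseteq> UNIV" by auto
      hence "card {0::'a,1} \<le> ?Q" using fin by (intro card_mono) auto
      thus ?thesis by simp
    qed
    have "card V' \<ge> 1"
    proof -
      have "?z \<in> V'" using sV' unfolding subsp_def by auto
      moreover have "finite V'" using finV unfolding V'_def by auto
      ultimately show ?thesis using card_0_eq by fastforce
    qed
    hence lt: "card V' < card V" using cardV Q2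
    proof -
      have "?Q * ?Q \<ge> 2 * 2" using Q2 mult_le_mono by blast
      hence "card V' * (?Q * ?Q) \<ge> card V' * 4" by simp
      thus ?thesis using cardV \<open>card V' \<ge> 1\<close> by linarith
    qed
    have ndV': "\<forall>x\<in>V'. (\<forall>y\<in>V'. hi x y = 0) \<longrightarrow> x = ?z"
    proof (intro ballI impI)
      fix x assume xV': "x \<in> V'" and H: "\<forall>y\<in>V'. hi x y = 0"
      have xV: "x \<in> V" and hxu: "hi x u = 0" and hxv: "hi x v = 0" using xV' unfolding V'_def by auto
      have lx: "length x = N" using xV lenV by auto
      have "\<forall>z\<in>V. hi x z = 0"
      proof
        fix z assume zV: "z \<in> V"
        have lz: "length z = N" using zV lenV by auto
        have "z = f (g z)" using lenV lu lv zV by (auto simp: f_def g_def vid1)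
        also have "hi x \<dots> = hi x (fst (g z)) + (\<alpha> z)^q * hi x u + (\<beta> z)^q * hi x v"
          unfolding f_def using hi_comb_right[of "fst (g z)" x u v "\<alpha> z" "\<beta> z"] lx lu lv lz gV'[OF zV]
          unfolding V'_def using lenV by (simp add: g_def)
        finally show "hi x z = 0" using H gV'[OF zV] hxu hxv by simp
      qed
      thus "x = ?z" using less.prems(2) xV by blast
    qed
    have chV': "\<forall>x\<in>V'. (\<forall>y\<in>U'. hi x y = 0) \<longleftrightarrow> x \<in> U'"
    proof (rule ballI, rule iffI)
      fix x assume xV': "x \<in> V'" and H: "\<forall>y\<in>U'. hi x y = 0"
      have xV: "x \<in> V" and hxu: "hi x u = 0" and hxv: "hi x v = 0" using xV' unfolding V'_def by auto
      have lx: "length x = N" using xV lenV by auto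
      have "\<forall>y\<in>U. hi x y = 0"
      proof
        fix y assume yU: "y \<in> U"
        have ly: "length y = N" using yU less.prems(4) lenV by auto
        define y' where "y' = vadd y (vsc (- hi y v) u)"
        have y'U: "y' \<in> U" unfolding y'_def using less.prems(3) yU uU unfolding subsp_def by auto
        have "hi y' v = 0" unfolding y'_def using ly lu lv by (simp add: hi_add_left hi_sc_left huv)
        hence y'U': "y' \<in> U'" using y'U unfolding U'_def by auto
        have "hi x y' = hi x y" unfolding y'_def
          using lx ly lu hxu by (simp add: hi_add_right hi_sc_right)
        thus "hi x y = 0" using H y'U' by simp
      qed
      hence "x \<in> U" using less.prems(5) xV by blast
      thus "x \<in> U'" using hxv unfolding U'_def by auto
    next
      fix x assume "x \<in> V'" "x \<in> U'"
      thus "\<forall>y\<in>U'. hi x y = 0" using Uperp unfolding U'_def by auto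
    qed
    obtain t where "card V' = ?Q^(2*t)"
      using less.hyps[OF lt sV' ndV' sU' U'V' chV'] by blast
    hence "card V = ?Q^(2*(Suc t))" using cardV by (simp add: power_add power2_eq_square mult_ac)
    thus ?thesis by blast
  qed
qed

end


definition cshift :: "'a::field \<Rightarrow> 'a list \<Rightarrow> 'a list" where
  "cshift l c = (if c = [] then [] else (l * last c) # butlast c)"

definition Phi :: "'a::field \<Rightarrow> 'a list \<Rightarrow> 'a list" where
  "Phi m a = a @ vsc m a"

lemma negashift_cshift: "negashift c = cshift (-1) c"
  by (simp add: negashift_def cshift_def)

lemma length_cshift[simp]: "length (cshift l c) = length c"
  by (simp add: cshift_def)

lemma nth_cshift: "i < length c \<Longrightarrow> cshift l c ! i = (if i = 0 then l * c!(length c - 1) else c!(i-1))"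
  by (cases c rule: rev_cases) (auto simp: cshift_def nth_append nth_Cons')

lemma cshift_vadd: "length x = length y \<Longrightarrow> cshift l (vadd x y) = vadd (cshift l x) (cshift l y)"
  by (rule nth_equalityI) (auto simp: nth_cshift algebra_simps)

lemma cshift_vsc: "cshift l (vsc a x) = vsc a (cshift l x)"
  by (rule nth_equalityI) (auto simp: nth_cshift algebra_simps)

lemma length_Phi[simp]: "length (Phi m a) = 2 * length a" by (simp add: Phi_def)

lemma Phi_vadd: "length a = length b \<Longrightarrow> vadd (Phi m a) (Phi m b) = Phi m (vadd a b)"
  unfolding Phi_def by (simp add: vadd_append) (rule nth_equalityI; simp add: algebra_simps)

lemma Phi_vsc: "vsc c (Phi m a) = Phi m (vsc c a)"
  unfolding Phi_def by (simp add: vsc_append) (rule nth_equalityI; simp add: algebra_simps)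

lemma Phi_zero: "Phi m (replicate M 0) = replicate (2*M) 0"
  unfolding Phi_def by (rule nth_equalityI) (auto simp: nth_append)

lemma cshift_Phi:
  assumes "m^2 * l = 1"
  shows "cshift l (Phi m a) = Phi m (cshift (inverse m) a)"
proof (cases a rule: rev_cases)
  case Nil thus ?thesis by (simp add: Phi_def cshift_def vsc_def)
next
  case (snoc ys y)
  have m0: "m \<noteq> 0" using assms by auto
  have lm: "l * m = inverse m" using assms m0 by (simp add: field_simps power2_eq_square)
  show ?thesis using m0 unfolding snoc Phi_def cshift_def
    by (simp add: vsc_def lm mult.assoc[symmetric] butlast_append)
qed

lemma cshift_iter:
  "j \<le> length y \<Longrightarrow> (cshift l ^^ j) (x @ y) = vsc l (drop (length y - j) y) @ x @ take (length y - j) y"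
proof (induction j)
  case 0 thus ?case by (simp add: vsc_def)
next
  case (Suc j)
  let ?k = "length y - Suc j"
  have k: "length y - j = Suc ?k" using Suc.prems by simp
  have ky: "?k < length y" using Suc.prems by simp
  have t: "take (Suc ?k) y = take ?k y @ [y ! ?k]" using ky by (simp add: take_Suc_conv_app_nth)
  have d: "drop ?k y = y ! ?k # drop (Suc ?k) y" using ky by (simp add: Cons_nth_drop_Suc)
  have IH: "(cshift l ^^ j) (x @ y) = (vsc l (drop (Suc ?k) y) @ x @ take ?k y) @ [y!?k]"
    using Suc.IH Suc.prems unfolding k t by simp
  show ?case unfolding funpow.simps comp_def IH d
    by (simp add: cshift_def vsc_def butlast_append)
qed

lemma cshift_half: "length x = length y \<Longrightarrow> (cshift l ^^ length y) (x @ y) = vsc l y @ x"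
  using cshift_iter[of "length y" y l x] by simp

context hq begin

definition SD :: "nat \<Rightarrow> 'a \<Rightarrow> 'a list set \<Rightarrow> bool" where
  "SD N l C \<longleftrightarrow> linear_code N C \<and> (\<forall>c\<in>C. cshift l c \<in> C) \<and> herm_self_dual q N C"

lemma hi_Phi: "length a = length b \<Longrightarrow> hi (Phi m a) (Phi k b) = (1 + m * k^q) * hi a b"
  unfolding Phi_def by (simp add: hi_append hi_sc_left hi_sc_right algebra_simps)

lemma hi_app_Phi: "length x = length b \<Longrightarrow> length y = length b \<Longrightarrow>
   hi (x @ y) (Phi m b) = hi x b + m^q * hi y b"
  unfolding Phi_def by (simp add: hi_append hi_sc_right)

lemma hi_Phi_app: "length x = length a \<Longrightarrow> length y = length a \<Longrightarrow>
   hi (Phi m a) (x @ y) = hi a x + m * hi a y"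
  unfolding Phi_def by (simp add: hi_append hi_sc_left)

lemma iter_in: "(\<forall>c\<in>C. cshift l c \<in> C) \<Longrightarrow> c \<in> C \<Longrightarrow> (cshift l ^^ j) c \<in> C"
  by (induction j) auto

end


lemma vadd_zero_r: "length x = N \<Longrightarrow> vadd x (replicate N 0) = x"
  by (rule nth_equalityI) auto

context hq begin

lemma SD_dual_mem: "SD N l C \<Longrightarrow> length v = N \<Longrightarrow> (\<And>c. c \<in> C \<Longrightarrow> hi v c = 0) \<Longrightarrow> v \<in> C"
  unfolding SD_def herm_self_dual_def herm_dual_def by blast

lemma SD_perp: "SD N l C \<Longrightarrow> x \<in> C \<Longrightarrow> y \<in> C \<Longrightarrow> hi x y = 0"
  unfolding SD_def herm_self_dual_def herm_dual_def by blast

lemma SD_len: "SD N l C \<Longrightarrow> x \<in> C \<Longrightarrow> length x = N"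
  unfolding SD_def linear_code_def by blast

lemma SD_subsp: "SD N l C \<Longrightarrow> subsp N C"
  unfolding SD_def linear_code_subsp by blast

lemma SD_intro:
  assumes "subsp N C" "\<forall>c\<in>C. cshift l c \<in> C" "\<And>x y. x \<in> C \<Longrightarrow> y \<in> C \<Longrightarrow> hi x y = 0"
   "\<And>v. length v = N \<Longrightarrow> (\<And>c. c \<in> C \<Longrightarrow> hi v c = 0) \<Longrightarrow> v \<in> C"
  shows "SD N l C"
  unfolding SD_def linear_code_subsp herm_self_dual_def herm_dual_def
  using assms by (auto simp: subsp_def)

lemma SD_base:
  assumes ml: "m^2 * l = 1" and mq: "m^(q+1) = -1"
  shows "SD (2*M) l (Phi m ` {a. length a = M})"
proof (rule SD_intro)
  let ?C = "Phi m ` {a. length a = M}"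
  show "subsp (2*M) ?C" unfolding subsp_def
  proof (intro conjI ballI allI)
    show "replicate (2*M) 0 \<in> ?C" using Phi_zero[of m M] by (metis (mono_tags) image_eqI length_replicate mem_Collect_eq)
  next
    fix x y assume "x \<in> ?C" "y \<in> ?C"
    then obtain a b where "x = Phi m a" "y = Phi m b" "length a = M" "length b = M" by auto
    thus "vadd x y \<in> ?C" using Phi_vadd[of a b m] by (intro image_eqI[of _ _ "vadd a b"]) auto
  next
    fix a x assume "x \<in> ?C"
    then obtain b where "x = Phi m b" "length b = M" by auto
    thus "vsc a x \<in> ?C" using Phi_vsc[where c=a and m=m and a=b] by (intro image_eqI[of _ _ "vsc a b"]) auto
  qed auto
  show "\<forall>c\<in>?C. cshift l c \<in> ?C"
  proof
    fix c assume "c \<in> ?C"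
    then obtain b where "c = Phi m b" "length b = M" by auto
    thus "cshift l c \<in> ?C" using cshift_Phi[OF ml, of b]
      by (intro image_eqI[of _ _ "cshift (inverse m) b"]) auto
  qed
  have mm: "1 + m * m^q = 0" using mq by (simp add: power_Suc[symmetric] del: power_Suc)
  show "hi x y = 0" if "x \<in> ?C" "y \<in> ?C" for x y
    using that hi_Phi mm by auto
  show "v \<in> ?C" if lv: "length v = 2*M" and H: "\<And>c. c \<in> ?C \<Longrightarrow> hi v c = 0" for v
  proof -
    define x where "x = take M v"
    define y where "y = drop M v"
    have v: "v = x @ y" unfolding x_def y_def by simp
    have lx: "length x = M" and ly: "length y = M" using lv unfolding x_def y_def by auto
    have "\<And>b. length b = M \<Longrightarrow> hi (vadd x (vsc (m^q) y)) b = 0"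
    proof -
      fix b :: "'a list" assume lb: "length b = M"
      have "hi v (Phi m b) = 0" using H lb by auto
      thus "hi (vadd x (vsc (m^q) y)) b = 0" using lx ly lb unfolding v
        by (simp add: hi_app_Phi hi_add_left hi_sc_left)
    qed
    hence z: "vadd x (vsc (m^q) y) = replicate M 0" using nondeg[of _ M] lx ly by simp
    have "y = vsc m x"
    proof (rule nth_equalityI)
      fix i assume "i < length y"
      hence "vadd x (vsc (m^q) y) ! i = 0" using z ly by simp
      hence "x!i + m^q * y!i = 0" using lx ly \<open>i < length y\<close> by simp
      hence "x!i = - (m^q * y!i)" by (simp add: eq_neg_iff_add_eq_0)
      hence "m * x!i = - (m * m^q) * y!i" by (simp add: mult.assoc)
      also have "m * m^q = -1" using mq by (simp add: power_Suc[symmetric] del: power_Suc)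
      finally show "y!i = vsc m x ! i" using \<open>i < length y\<close> lx ly by simp
    qed (use lx ly in simp)
    hence "v = Phi m x" unfolding v Phi_def by simp
    thus ?thesis using lx by auto
  qed
qed

end


context hq begin

lemma SD_step:
  assumes ml: "m^2 * l = 1" and mq: "m^(q+1) = 1"
    and D1: "SD M (inverse m) D1" and D2: "SD M (- inverse m) D2"
  shows "SD (2*M) l {vadd (Phi m a) (Phi (-m) b) | a b. a \<in> D1 \<and> b \<in> D2}"
proof (rule SD_intro)
  let ?C = "{vadd (Phi m a) (Phi (-m) b) | a b. a \<in> D1 \<and> b \<in> D2}"
  have m0: "m \<noteq> 0" using ml by auto
  have mqi: "m^q = inverse m" using mq m0 by (simp add: field_simps power_Suc[symmetric] del: power_Suc)
  have ml': "(-m)^2 * l = 1" using ml by simp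
  have s1: "subsp M D1" and s2: "subsp M D2" using D1 D2 SD_subsp by auto
  have l1: "\<And>a. a \<in> D1 \<Longrightarrow> length a = M" and l2: "\<And>a. a \<in> D2 \<Longrightarrow> length a = M"
    using SD_len D1 D2 by auto
  have z1: "replicate M 0 \<in> D1" and z2: "replicate M 0 \<in> D2" using s1 s2 unfolding subsp_def by auto
  have mem: "vadd (Phi m a) (Phi (-m) b) \<in> ?C" if "a \<in> D1" "b \<in> D2" for a b using that by blast
  show "subsp (2*M) ?C" unfolding subsp_def
  proof (intro conjI ballI allI)
    show "?C \<subseteq> {x. length x = 2*M}" using l1 l2 by auto
    show "replicate (2*M) 0 \<in> ?C"
      using mem[OF z1 z2] by (simp add: Phi_zero vadd_zero_r)
  next
    fix x y assume "x \<in> ?C" "y \<in> ?C"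
    then obtain a b a2 b2 where x: "x = vadd (Phi m a) (Phi (-m) b)" and y: "y = vadd (Phi m a2) (Phi (-m) b2)"
      and ab: "a \<in> D1" "b \<in> D2" "a2 \<in> D1" "b2 \<in> D2" by blast
    have "vadd x y = vadd (Phi m (vadd a a2)) (Phi (-m) (vadd b b2))"
      unfolding x y using l1 l2 ab Phi_vadd[symmetric, of a a2 m] Phi_vadd[symmetric, of b b2 "-m"]
      by simp (rule nth_equalityI; simp add: algebra_simps)
    moreover have "vadd a a2 \<in> D1" "vadd b b2 \<in> D2" using s1 s2 ab unfolding subsp_def by auto
    ultimately show "vadd x y \<in> ?C" by blast
  next
    fix c x assume "x \<in> ?C"
    then obtain a b where x: "x = vadd (Phi m a) (Phi (-m) b)" and ab: "a \<in> D1" "b \<in> D2" by blast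
    have "vsc c x = vadd (Phi m (vsc c a)) (Phi (-m) (vsc c b))"
      unfolding x using l1 l2 ab Phi_vsc[symmetric, where c=c and m=m and a=a] Phi_vsc[symmetric, where c=c and m="-m" and a=b]
      by simp (rule nth_equalityI; simp add: algebra_simps)
    moreover have "vsc c a \<in> D1" "vsc c b \<in> D2" using s1 s2 ab unfolding subsp_def by auto
    ultimately show "vsc c x \<in> ?C" by blast
  qed
  show "\<forall>c\<in>?C. cshift l c \<in> ?C"
  proof
    fix x assume "x \<in> ?C"
    then obtain a b where x: "x = vadd (Phi m a) (Phi (-m) b)" and ab: "a \<in> D1" "b \<in> D2" by blast
    have "cshift l x = vadd (Phi m (cshift (inverse m) a)) (Phi (-m) (cshift (inverse (-m)) b))"
      unfolding x using l1 l2 ab by (simp add: cshift_vadd cshift_Phi[OF ml] cshift_Phi[OF ml'])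
    moreover have "cshift (inverse m) a \<in> D1" "cshift (inverse (-m)) b \<in> D2"
      using D1 D2 ab unfolding SD_def by auto
    ultimately show "cshift l x \<in> ?C" by blast
  qed
  have hPP: "hi (Phi k1 a) (Phi k2 b) = 0" if "k1 \<in> {m, -m}" "k2 \<in> {m,-m}" "a \<in> D1 \<union> D2" "b \<in> D1 \<union> D2"
      "k1 = k2 \<Longrightarrow> hi a b = 0" for k1 k2 a b
  proof -
    have "length a = length b" using that l1 l2 by auto
    hence e: "hi (Phi k1 a) (Phi k2 b) = (1 + k1 * k2^q) * hi a b" by (rule hi_Phi)
    show ?thesis
    proof (cases "k1 = k2")
      case True thus ?thesis using e that by simp
    next
      case False
      hence "k1 * k2^q = - (m * m^q)" using that conj_minus by auto
      also have "m * m^q = 1" using mq by (simp add: power_Suc[symmetric] del: power_Suc)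
      finally show ?thesis using e by simp
    qed
  qed
  show "hi x y = 0" if "x \<in> ?C" "y \<in> ?C" for x y
  proof -
    obtain a b a2 b2 where x: "x = vadd (Phi m a) (Phi (-m) b)" and y: "y = vadd (Phi m a2) (Phi (-m) b2)"
      and ab: "a \<in> D1" "b \<in> D2" "a2 \<in> D1" "b2 \<in> D2" using \<open>x \<in> ?C\<close> \<open>y \<in> ?C\<close> by blast
    have p1: "hi a a2 = 0" using SD_perp[OF D1] ab by auto
    have p2: "hi b b2 = 0" using SD_perp[OF D2] ab by auto
    have mm: "- m \<noteq> m"
    proof
      assume "- m = m"
      hence "m + m = 0" by (metis add.left_inverse)
      hence "2 * m = 0" by (simp only: mult_2)
      thus False using m0 two_nz by simp
    qed
    have c1: "hi (Phi (-m) b) (Phi m a2) = 0" by (rule hPP) (use ab mm in auto)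
    have c2: "hi (Phi m a) (Phi (-m) b2) = 0" by (rule hPP) (use ab mm in auto)
    have c3: "hi (Phi m a) (Phi m a2) = 0" by (rule hPP) (use ab p1 in auto)
    have c4: "hi (Phi (-m) b) (Phi (-m) b2) = 0" by (rule hPP) (use ab p2 in auto)
    show ?thesis unfolding x y using l1 l2 ab
      by (simp add: hi_add_left hi_add_right c1 c2 c3 c4)
  qed
  show "v \<in> ?C" if lv: "length v = 2*M" and H: "\<And>c. c \<in> ?C \<Longrightarrow> hi v c = 0" for v
  proof -
    define x where "x = take M v"
    define y where "y = drop M v"
    have v: "v = x @ y" unfolding x_def y_def by simp
    have lx: "length x = M" and ly: "length y = M" using lv unfolding x_def y_def by auto
    define a where "a = vsc (inverse 2) (vadd x (vsc (inverse m) y))"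
    define b where "b = vsc (inverse 2) (vadd x (vsc (- inverse m) y))"
    have la: "length a = M" and lb: "length b = M" using lx ly unfolding a_def b_def by auto
    have four: "(4::'a) \<noteq> 0"
    proof -
      have "(4::'a) = 2 * 2" by simp
      thus ?thesis using two_nz by (simp only: mult_eq_0_iff) simp
    qed
    have "a \<in> D1"
    proof (rule SD_dual_mem[OF D1 la])
      fix d assume d: "d \<in> D1"
      have ld: "length d = M" using l1 d by auto
      have "vadd (Phi m d) (Phi (-m) (replicate M 0)) \<in> ?C" using mem[OF d z2] .
      hence "hi v (Phi m d) = 0" using H ld by (simp add: Phi_zero vadd_zero_r)
      hence "hi x d + inverse m * hi y d = 0" using lx ly ld unfolding v by (simp add: hi_app_Phi mqi)
      thus "hi a d = 0" unfolding a_def using lx ly ld by (simp add: hi_sc_left hi_add_left)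
    qed
    moreover have "b \<in> D2"
    proof (rule SD_dual_mem[OF D2 lb])
      fix d assume d: "d \<in> D2"
      have ld: "length d = M" using l2 d by auto
      have "vadd (Phi m (replicate M 0)) (Phi (-m) d) \<in> ?C" using mem[OF z1 d] .
      moreover have "vadd (Phi m (replicate M 0)) (Phi (-m) d) = Phi (-m) d"
        using ld by (rule_tac nth_equalityI) (auto simp: Phi_zero)
      ultimately have "hi v (Phi (-m) d) = 0" using H by simp
      hence "hi x d - inverse m * hi y d = 0" using lx ly ld unfolding v by (simp add: hi_app_Phi mqi conj_minus)
      thus "hi b d = 0" unfolding b_def using lx ly ld by (simp add: hi_sc_left hi_add_left)
    qed
    moreover have "v = vadd (Phi m a) (Phi (-m) b)"
      unfolding v Phi_def using lx ly la lb m0 two_nz four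
      by (simp add: vadd_append) (intro conjI; rule nth_equalityI; simp add: a_def b_def field_simps)
    ultimately show ?thesis by blast
  qed
qed

end


context hq begin

lemma SD_red:
  assumes C: "SD (2*M) l C" and ml: "m^2 * l = 1" and mq: "m^(q+1) = 1"
  shows "SD M (inverse m) {a. length a = M \<and> Phi m a \<in> C}"
proof (rule SD_intro)
  let ?D = "{a. length a = M \<and> Phi m a \<in> C}"
  have m0: "m \<noteq> 0" using ml by auto
  have mqi: "m^q = inverse m" using mq m0 by (simp add: field_simps power_Suc[symmetric] del: power_Suc)
  have sC: "subsp (2*M) C" using SD_subsp[OF C] .
  have shC: "\<forall>c\<in>C. cshift l c \<in> C" using C unfolding SD_def by blast
  show "subsp M ?D" unfolding subsp_def
  proof (intro conjI ballI allI)
    show "replicate M 0 \<in> ?D" using sC by (simp add: Phi_zero subsp_def)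
  next
    fix x y assume "x \<in> ?D" "y \<in> ?D"
    hence "vadd (Phi m x) (Phi m y) \<in> C" "length x = M" "length y = M" using sC unfolding subsp_def by auto
    thus "vadd x y \<in> ?D" using Phi_vadd[of x y m] by simp
  next
    fix a x assume "x \<in> ?D"
    hence "vsc a (Phi m x) \<in> C" "length x = M" using sC unfolding subsp_def by auto
    thus "vsc a x \<in> ?D" using Phi_vsc[where c=a and m=m and a=x] by simp
  qed auto
  show "\<forall>c\<in>?D. cshift (inverse m) c \<in> ?D"
    using shC cshift_Phi[OF ml] by auto
  show "hi x y = 0" if "x \<in> ?D" "y \<in> ?D" for x y
  proof -
    have "hi (Phi m x) (Phi m y) = 0" using SD_perp[OF C] that by auto
    moreover have "hi (Phi m x) (Phi m y) = 2 * hi x y" using that hi_Phi mq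
      by (simp add: power_Suc[symmetric] del: power_Suc)
    ultimately show ?thesis using two_nz by simp
  qed
  show "v \<in> ?D" if lv: "length v = M" and H: "\<And>c. c \<in> ?D \<Longrightarrow> hi v c = 0" for v
  proof -
    have "Phi m v \<in> C"
    proof (rule SD_dual_mem[OF C])
      show "length (Phi m v) = 2*M" using lv by simp
      fix c assume cC: "c \<in> C"
      have lc: "length c = 2*M" using SD_len[OF C cC] .
      define x where "x = take M c"
      define y where "y = drop M c"
      have c: "c = x @ y" unfolding x_def y_def by simp
      have lx: "length x = M" and ly: "length y = M" using lc unfolding x_def y_def by auto
      have "(cshift l ^^ M) c \<in> C" using iter_in[OF shC cC] .
      hence "(cshift l ^^ length y) (x @ y) \<in> C" using ly c by simp
      hence sh: "vsc l y @ x \<in> C" using cshift_half[of x y l] lx ly by simp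
      define a' where "a' = vsc (inverse 2) (vadd x (vsc (m*l) y))"
      have la': "length a' = M" unfolding a'_def using lx ly by simp
      have "Phi m a' = vsc (inverse 2) (vadd c (vsc m (vsc l y @ x)))"
        unfolding Phi_def a'_def c using lx ly ml
        by (simp add: vadd_append vsc_append) (intro conjI; rule nth_equalityI; simp add: algebra_simps power2_eq_square)
      also have "\<dots> \<in> C" using sC cC sh unfolding subsp_def by blast
      finally have "a' \<in> ?D" using la' by simp
      hence "hi v a' = 0" using H by simp
      moreover have "hi v a' = inverse 2 * (hi v x + m * hi v y)"
      proof -
        have "m * l = inverse m" using ml m0 by (simp add: field_simps power2_eq_square)
        hence "(m * l)^q = inverse (m^q)" by (simp add: power_inverse)
        hence "(m * l)^q = m" using mqi by simp
        thus ?thesis unfolding a'_def using lv lx ly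
          by (simp add: hi_sc_right hi_add_right conj_half conj_half[unfolded inverse_eq_divide])
      qed
      ultimately have "hi v x + m * hi v y = 0" using two_nz by simp
      thus "hi (Phi m v) c = 0" unfolding c using lv lx ly by (simp add: hi_Phi_app)
    qed
    thus ?thesis using lv by simp
  qed
qed

lemma odd_no_sd:
  fixes C :: "'a list set"
  assumes fin: "finite (UNIV::'a set)" and C: "linear_code N C" "herm_self_dual q N C"
  shows "even N"
proof -
  let ?V = "{x::'a list. length x = N}"
  have sV: "subsp N ?V" unfolding subsp_def by auto
  have nd: "\<forall>x\<in>?V. (\<forall>y\<in>?V. hi x y = 0) \<longrightarrow> x = replicate N 0"
    using nondeg by auto
  have sC: "subsp N C" using C linear_code_subsp by auto
  have CV: "C \<subseteq> ?V" using sC unfolding subsp_def by auto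
  have ch: "\<forall>x\<in>?V. (\<forall>y\<in>C. hi x y = 0) \<longleftrightarrow> x \<in> C"
    using C(2) unfolding herm_self_dual_def herm_dual_def by blast
  obtain t where ct: "card ?V = card (UNIV::'a set)^(2*t)" using odd_aux[OF fin sV nd sC CV ch] by blast
  have "card ?V = card (UNIV::'a set)^N"
    using card_lists_length_eq[OF fin, of N] by simp
  moreover have "card (UNIV::'a set) > 1"
  proof -
    have "card {0::'a,1} \<le> card (UNIV::'a set)" using fin by (intro card_mono) auto
    thus ?thesis by simp
  qed
  ultimately have "N = 2*t" using ct power_inject_exp by metis
  thus ?thesis by simp
qed

end


context hq begin

lemma fwd:
  fixes C :: "'a list set"
  assumes fin: "finite (UNIV::'a set)" and eta: "\<eta>^(q+1) = 1" and m: "odd m"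
  shows "SD (2^d * m) (\<eta>^(2^d)) C \<Longrightarrow> False"
proof (induction d arbitrary: C)
  case 0
  hence "even m" using odd_no_sd[OF fin, of m C] unfolding SD_def by simp
  thus False using m by simp
next
  case (Suc d)
  have e0: "\<eta> \<noteq> 0" using eta by (cases "\<eta> = 0") auto
  define \<mu> where "\<mu> = inverse (\<eta>^(2^d))"
  have a: "(\<eta>^(2^d))^2 = \<eta>^(2^Suc d)" by (simp add: power_mult[symmetric] mult.commute)
  have "\<mu>^2 * \<eta>^(2^Suc d) = inverse ((\<eta>^(2^d))^2) * \<eta>^(2^Suc d)"
    unfolding \<mu>_def by (simp only: power_inverse)
  hence ml: "\<mu>^2 * \<eta>^(2^Suc d) = 1" using a e0 by simp
  have "(\<eta>^(2^d))^(q+1) = (\<eta>^(q+1))^(2^d)" unfolding power_mult[symmetric] by (simp add: mult.commute)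
  hence "(\<eta>^(2^d))^(q+1) = 1" using eta by simp
  hence mq: "\<mu>^(q+1) = 1" unfolding \<mu>_def by (simp only: power_inverse) simp
  have "SD (2 * (2^d * m)) (\<eta>^(2^Suc d)) C" using Suc.prems by (simp add: mult.assoc)
  from SD_red[OF this ml mq] show False using Suc.IH unfolding \<mu>_def by simp
qed

lemma bwd:
  assumes z: "\<zeta>^(2^s) = -1" and qs: "q + 1 = 2^s * ow" and ow: "odd ow"
  shows "1 \<le> d \<Longrightarrow> d \<le> s \<Longrightarrow> odd u \<Longrightarrow> \<exists>C. SD (2^d * M) ((\<zeta>^(2^d))^u) C"
proof (induction d arbitrary: u rule: nat_induct_at_least)
  case base
  define \<mu> where "\<mu> = inverse (\<zeta>^u)"
  have z0: "\<zeta> \<noteq> 0" proof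
    assume "\<zeta> = 0" thus False using z by (simp add: power_0_left)
  qed
  have a: "(\<zeta>^u)^2 = (\<zeta>^(2^1))^u" by (simp add: power_mult[symmetric] mult.commute)
  have "\<mu>^2 * (\<zeta>^(2^1))^u = inverse ((\<zeta>^u)^2) * (\<zeta>^(2^1))^u"
    unfolding \<mu>_def by (simp only: power_inverse)
  hence ml: "\<mu>^2 * (\<zeta>^(2^1))^u = 1" using a z0 by simp
  have "\<zeta>^(u * (q+1)) = ((\<zeta>^(2^s))^ow)^u" unfolding qs by (simp add: power_mult[symmetric] mult_ac)
  also have "\<dots> = -1" using z ow base by simp
  finally have "(\<zeta>^u)^(q+1) = -1" by (simp only: power_mult[symmetric])
  hence mq: "\<mu>^(q+1) = -1" unfolding \<mu>_def by (simp only: power_inverse) simp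
  show ?case using SD_base[OF ml mq, of M] by auto
next
  case (Suc d)
  define \<mu> where "\<mu> = inverse ((\<zeta>^(2^d))^u)"
  have z0: "\<zeta> \<noteq> 0" proof
    assume "\<zeta> = 0" thus False using z by (simp add: power_0_left)
  qed
  have a: "((\<zeta>^(2^d))^u)^2 = (\<zeta>^(2^Suc d))^u" by (simp add: power_mult[symmetric] mult_ac)
  have "\<mu>^2 * (\<zeta>^(2^Suc d))^u = inverse (((\<zeta>^(2^d))^u)^2) * (\<zeta>^(2^Suc d))^u"
    unfolding \<mu>_def by (simp only: power_inverse)
  hence ml: "\<mu>^2 * (\<zeta>^(2^Suc d))^u = 1" using a z0 by simp
  obtain d' where d': "d = Suc d'" using Suc.hyps by (cases d) auto
  have "\<zeta>^(2^d * u * (q+1)) = ((\<zeta>^(2^s))^(2 * 2^d' * ow))^u" unfolding qs d'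
    by (simp add: power_mult[symmetric] mult_ac)
  also have "\<dots> = 1" by (simp add: z power_mult)
  finally have "((\<zeta>^(2^d))^u)^(q+1) = 1" by (simp only: power_mult[symmetric])
  hence mq: "\<mu>^(q+1) = 1" unfolding \<mu>_def by (simp only: power_inverse) simp
  obtain D1 where D1: "SD (2^d * M) ((\<zeta>^(2^d))^u) D1" using Suc.IH Suc.prems by auto
  have sd: "s - d \<ge> 1" using Suc.prems by simp
  have "(\<zeta>^(2^d))^(2^(s-d)) = -1" using z Suc.prems
    by (simp add: power_mult[symmetric] power_add[symmetric])
  hence neg: "(\<zeta>^(2^d))^(u + 2^(s-d)) = - ((\<zeta>^(2^d))^u)" by (simp add: power_add)
  have odd2: "odd (u + 2^(s-d))" using Suc.prems sd by simp
  obtain D2 where D2: "SD (2^d * M) ((\<zeta>^(2^d))^(u + 2^(s-d))) D2"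
    using Suc.IH[of "u + 2^(s-d)"] odd2 Suc.prems by auto
  have iv: "inverse \<mu> = (\<zeta>^(2^d))^u" unfolding \<mu>_def by simp
  have "SD (2 * (2^d * M)) ((\<zeta>^(2^Suc d))^u) {vadd (Phi \<mu> a) (Phi (-\<mu>) b) | a b. a \<in> D1 \<and> b \<in> D2}"
    by (rule SD_step[OF ml mq]) (use D1 D2 neg iv in simp_all)
  thus ?case by (auto simp: mult.assoc)
qed

end


lemma two_pow_odd: "(n::nat) > 0 \<Longrightarrow> \<exists>s ow. n = 2^s * ow \<and> odd ow"
proof (induction n rule: less_induct)
  case (less n)
  show ?case
  proof (cases "even n")
    case True
    then obtain k where k: "n = 2*k" by auto
    hence "k < n" "k > 0" using less.prems by auto
    then obtain s ow where "k = 2^s * ow" "odd ow" using less.IH by blast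
    thus ?thesis using k by (intro exI[of _ "Suc s"] exI[of _ ow]) auto
  next
    case False thus ?thesis by (intro exI[of _ 0] exI[of _ n]) auto
  qed
qed

theorem corollary3p14:
  fixes p \<nu> r n' n l :: nat
  assumes "prime p" and "odd p"
    and "\<nu> > 0" and "odd n'" and "\<not> p dvd n'"
    and "n = 2 ^ \<nu> * p ^ r * n'"
    and "l > 0"
    and "card (UNIV :: 'a set) = p ^ (2 * l)"
  shows "(\<exists>C :: ('a::{finite,field}) list set. negacyclic_code n C \<and> linear_code n C
             \<and> herm_self_dual (p ^ l) n C)
         \<longleftrightarrow> \<not> (2 ^ (\<nu> + 1) dvd p ^ l + 1)"
proof -
  define q where "q = p^l"
  let ?Q = "card (UNIV :: 'a set)"
  have Qq: "?Q = q * q" using assms(8) unfolding q_def by (simp add: power_mult[symmetric] mult_2 power_add)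
  have char: "CHAR('a) = p" using char_is_p[OF assms(1) assms(8)] assms(7) by simp
  have qodd: "odd q" using assms(2) unfolding q_def by simp
  have q1: "q \<ge> 1" using qodd by (cases q) auto
  interpret hq q "TYPE('a)"
  proof
    show "odd q" by fact
    show "(a+b)^q = a^q + b^q" for a b :: 'a
      using freshmans_dream'[of q l a b] char assms(1) unfolding q_def by simp
    show "(a^q)^q = a" for a :: 'a
      using pow_card_same[of a] Qq by (simp add: power_mult[symmetric])
    show "(2::'a) \<noteq> 0"
    proof
      assume "(2::'a) = 0"
      hence "of_nat 2 = (0::'a)" by simp
      hence "p dvd 2" using of_nat_eq_0_iff_char_dvd[where ?'a='a, of 2] char by simp
      thus False using assms(1,2) dvd_imp_le[of p 2] prime_ge_2_nat[of p] by (cases "p = 2") auto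
    qed
  qed
  have fin: "finite (UNIV::'a set)" by simp
  have Q3: "?Q \<ge> 3"
  proof -
    have "p \<ge> 3" using assms(1,2) prime_ge_2_nat[of p] by (cases "p = 2") auto
    hence "p ^ (2*l) \<ge> 3^(2*l)" by (simp add: power_mono)
    moreover have "3^(2*l) \<ge> (3::nat)" using assms(7) by (simp add: self_le_power)
    ultimately show ?thesis using assms(8) by simp
  qed
  obtain x :: 'a where x0: "x \<noteq> 0" and xh: "x ^ ((?Q - 1) div 2) \<noteq> 1"
    using exists_nonres[OF Q3] by blast
  define h where "h = (q - 1) div 2"
  have h: "q - 1 = 2 * h" using qodd q1 unfolding h_def by (auto elim!: oddE)
  have Qh: "(?Q - 1) div 2 = h * (q+1)" and Qh2: "?Q - 1 = 2 * (h * (q+1))"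
  proof -
    obtain k where k: "q = Suc k" using q1 by (cases q) auto
    have "?Q - 1 = (q - 1) * (q + 1)" unfolding Qq k by simp
    thus "?Q - 1 = 2 * (h * (q+1))" using h by simp
    thus "(?Q - 1) div 2 = h * (q+1)" by simp
  qed
  have xQ: "x ^ (?Q - 1) = 1"
  proof -
    obtain k where k: "?Q = Suc k" using Q3 by (cases ?Q) auto
    have "x * x ^ k = x * 1" using pow_card_same[of x] unfolding k by (simp only: power_Suc) simp
    thus ?thesis using x0 k by simp
  qed
  define z where "z = x ^ (h * (q+1))"
  have zm: "z = -1"
  proof -
    have "z * z = x ^ (?Q - 1)" unfolding z_def Qh2 by (simp only: power_add[symmetric] mult_2)
    hence "z * z = 1" using xQ by simp
    hence "(z - 1) * (z + 1) = 0" by (simp add: algebra_simps)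
    moreover have "z \<noteq> 1" using xh Qh z_def by simp
    ultimately have "z + 1 = 0" by simp
    thus ?thesis by (simp add: eq_neg_iff_add_eq_0)
  qed
  have equiv: "(negacyclic_code n C \<and> linear_code n C \<and> herm_self_dual (p ^ l) n C) = SD n (-1) C" for C :: "'a list set"
    unfolding SD_def negacyclic_code_def negashift_cshift[abs_def] unfolding q_def by auto
  show ?thesis
  proof
    assume "\<exists>C :: 'a list set. negacyclic_code n C \<and> linear_code n C \<and> herm_self_dual (p ^ l) n C"
    then obtain C :: "'a list set" where C: "SD n (-1) C" using equiv by blast
    show "\<not> (2 ^ (\<nu> + 1) dvd p ^ l + 1)"
    proof
      assume "2 ^ (\<nu> + 1) dvd p ^ l + 1"
      then obtain w where w: "q + 1 = 2^(\<nu>+1) * w" unfolding q_def by blast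
      define \<eta> where "\<eta> = x ^ (2 * h * w)"
      have "\<eta>^(2^\<nu>) = z" unfolding \<eta>_def z_def w by (simp add: power_mult[symmetric] mult_ac)
      hence e1: "\<eta>^(2^\<nu>) = -1" using zm by simp
      have ex: "2*h*w*(q+1) = (?Q-1)*w" unfolding Qh2 by (simp add: algebra_simps)
      have "\<eta>^(q+1) = x^(2*h*w*(q+1))" unfolding \<eta>_def by (simp only: power_mult)
      hence "\<eta>^(q+1) = (x ^ (?Q - 1)) ^ w" unfolding ex by (simp only: power_mult)
      hence e2: "\<eta>^(q+1) = 1" using xQ by simp
      have m: "odd (p^r * n')" using assms(2,4) by simp
      have "SD (2^\<nu> * (p^r * n')) (\<eta>^(2^\<nu>)) C" using C e1 assms(6) by (simp add: mult.assoc)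
      thus False using fwd[OF fin e2 m] by blast
    qed
  next
    assume nd: "\<not> (2 ^ (\<nu> + 1) dvd p ^ l + 1)"
    obtain s ow where so: "q + 1 = 2^s * ow" and ow: "odd ow" using two_pow_odd[of "q+1"] by auto
    have s1: "s \<ge> 1" using so ow qodd by (cases s) auto
    have sn: "s \<le> \<nu>"
    proof (rule ccontr)
      assume "\<not> s \<le> \<nu>"
      hence "\<nu>+1 \<le> s" by simp
      hence "(2::nat)^(\<nu>+1) dvd 2^s" by (rule le_imp_power_dvd)
      hence "2^(\<nu>+1) dvd q + 1" unfolding so using dvd_mult2 by blast
      thus False using nd unfolding q_def by simp
    qed
    define \<zeta> where "\<zeta> = x ^ (h * ow)"
    have zs: "\<zeta>^(2^s) = -1" using zm unfolding \<zeta>_def z_def so by (simp add: power_mult[symmetric] mult_ac)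
    obtain C where C: "SD (2^s * (2^(\<nu>-s) * p^r * n')) ((\<zeta>^(2^s))^1) C"
      using bwd[OF zs so ow, where d=s and u=1 and M="2^(\<nu>-s) * p^r * n'"] s1 by auto
    have "2^s * (2^(\<nu>-s) * p^r * n') = n" using assms(6) sn
      by (simp add: mult.assoc[symmetric] power_add[symmetric])
    hence "SD n (-1) C" using C zs by simp
    thus "\<exists>C :: 'a list set. negacyclic_code n C \<and> linear_code n C \<and> herm_self_dual (p ^ l) n C"
      using equiv by blast
  qed
qed

end
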